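(* Let $\mathcal{H}$ be a separable Hilbert space, $\{\mathcal{H}_j\}_{j\in J}$ ($J\subseteq\mathbb{Z}$) a sequence of closed subspaces of $\mathcal{H}$, and $K\in\mathcal{B}(\mathcal{H})$ with closed range $\mathcal{R}(K)$. Let $\{\Lambda_j\}_{j\in J}$ and $\{\Theta_j\}_{j\in J}$ be $g$-Bessel sequences with $\Lambda_j,\Theta_j\in\mathcal{B}(\mathcal{H},\mathcal{H}_j)$, and let $U:\mathcal{R}(K)\to\mathcal{R}(K)$, $Uf=\sum_{j\in J}\Lambda_j^{\ast}\Theta_jf$, satisfy $\|I_{\mathcal{R}(K)}-U\|<1$ (i.e. $\{\Theta_j\}$ is an approximate $K$-$g$-dual of $\{\Lambda_j\}$). Then for every $N\in\mathbb{N}$ the sequence $\{\gamma_j^{(N)}\}_{j\in J}$, $\gamma_j^{(N)}=\sum_{n=0}^{N}\Theta_j(I_{\mathcal{R}(K)}-U)^n:\mathcal{R}(K)\to\mathcal{H}_j$, is an approximate $K$-$g$-dual of $\{\Lambda_j\}_{j\in J}$, i.e. it is a $g$-Bessel sequence on $\mathcal{R}(K)$ and $\|I_{\mathcal{R}(K)}-V_N\|<1$, where $V_Nf=\sum_{j\in J}\Lambda_j^{\ast}\gamma_j^{(N)}f$ for $f\in\mathcal{R}(K)$.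
   Context: A sequence $\{\Lambda_j\in\mathcal{B}(\mathcal{H},\mathcal{H}_j)\}_{j\in J}$ is $g$-Bessel if there is $B>0$ with $\sum_{j\in J}\|\Lambda_jf\|^2\leq B\|f\|^2$ for all $f$ in its domain; $T_\Lambda:\{g_j\}\mapsto\sum_j\Lambda_j^\ast g_j$ denotes its synthesis operator, so $U=T_\Lambda T_\Theta^\ast$ restricted to $\mathcal{R}(K)$. Two $g$-Bessel sequences are approximately dual $K$-$g$-frames if $\|I_{\mathcal{R}(K)}-T_\Lambda T_\Theta^\ast\|<1$, where $T_\Lambda T_\Theta^\ast$ is regarded as an operator on $\mathcal{R}(K)$. *)

theory Defs
  imports "HOL-Analysis.Analysis"
begin

definition g_bessel_on :: "'a::real_normed_vector set \<Rightarrow> ('i \<Rightarrow> 'a \<Rightarrow> 'b::real_normed_vector) \<Rightarrow> 'i set \<Rightarrow> bool" where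
  "g_bessel_on S Lam J \<longleftrightarrow>
     (\<exists>B>0. \<forall>f\<in>S. (\<lambda>j. (norm (Lam j f))\<^sup>2) summable_on J \<and>
                    (\<Sum>\<^sub>\<infinity>j\<in>J. (norm (Lam j f))\<^sup>2) \<le> B * (norm f)\<^sup>2)"

definition opnorm_on :: "'a::real_normed_vector set \<Rightarrow> ('a \<Rightarrow> 'b::real_normed_vector) \<Rightarrow> real" where
  "opnorm_on S T = Inf {c. 0 \<le> c \<and> (\<forall>f\<in>S. norm (T f) \<le> c * norm f)}"

definition mixed_op :: "('i \<Rightarrow> 'b \<Rightarrow> 'a::{real_normed_vector}) \<Rightarrow> ('i \<Rightarrow> 'a \<Rightarrow> 'b) \<Rightarrow> 'i set \<Rightarrow> 'a \<Rightarrow> 'a" where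
  "mixed_op LamAdj Gam J f = (\<Sum>\<^sub>\<infinity>j\<in>J. LamAdj j (Gam j f))"

end

theory Submission
  imports Defs
begin

lemma inner_eq_all:
  fixes a b :: "'a::real_inner"
  assumes "\<And>x. inner x a = inner x b" shows "a = b"
proof -
  have "inner (a - b) (a - b) = 0" using assms[of "a-b"] by (simp add: inner_diff_right)
  then show ?thesis by simp
qed

lemma adj_sum:
  fixes L A :: "'a::real_inner \<Rightarrow> 'a"
  assumes "subspace H" "\<And>x y. y \<in> H \<Longrightarrow> inner (L x) y = inner x (A y)"
    "finite I" "\<And>i. i\<in>I \<Longrightarrow> a i \<in> H"
  shows "A (\<Sum>i\<in>I. a i) = (\<Sum>i\<in>I. A (a i))"
proof (rule inner_eq_all)
  fix x
  have "(\<Sum>i\<in>I. a i) \<in> H" using assms by (simp add: subspace_sum)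
  then have "inner x (A (\<Sum>i\<in>I. a i)) = inner (L x) (\<Sum>i\<in>I. a i)" using assms by simp
  also have "\<dots> = (\<Sum>i\<in>I. inner (L x) (a i))" by (simp add: inner_sum_right)
  also have "\<dots> = (\<Sum>i\<in>I. inner x (A (a i)))" using assms by simp
  also have "\<dots> = inner x (\<Sum>i\<in>I. A (a i))" by (simp add: inner_sum_right)
  finally show "inner x (A (\<Sum>i\<in>I. a i)) = inner x (\<Sum>i\<in>I. A (a i))" .
qed

lemma finite_synth:
  fixes Lam Lamadj :: "'i \<Rightarrow> 'a::real_inner \<Rightarrow> 'a"
  assumes adj: "\<And>j x y. j \<in> J \<Longrightarrow> y \<in> Hs j \<Longrightarrow> inner (Lam j x) y = inner x (Lamadj j y)"
    and bes: "\<And>x. (\<lambda>j. (norm (Lam j x))\<^sup>2) summable_on J \<and> (\<Sum>\<^sub>\<infinity>j\<in>J. (norm (Lam j x))\<^sup>2) \<le> B * (norm x)\<^sup>2"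
    and B: "B > 0" and F: "finite F" "F \<subseteq> J" and g: "\<And>j. j\<in>F \<Longrightarrow> g j \<in> Hs j"
  shows "norm (\<Sum>j\<in>F. Lamadj j (g j)) \<le> sqrt B * sqrt (\<Sum>j\<in>F. (norm (g j))\<^sup>2)"
proof -
  define s where "s = (\<Sum>j\<in>F. Lamadj j (g j))"
  have "(norm s)\<^sup>2 = inner s s" by (simp add: power2_norm_eq_inner)
  also have "\<dots> = (\<Sum>j\<in>F. inner s (Lamadj j (g j)))" by (simp add: s_def inner_sum_right)
  also have "\<dots> = (\<Sum>j\<in>F. inner (Lam j s) (g j))" using adj g F by (auto intro!: sum.cong)
  also have "\<dots> \<le> (\<Sum>j\<in>F. norm (Lam j s) * norm (g j))"
    by (intro sum_mono norm_cauchy_schwarz)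
  also have "\<dots> \<le> sqrt (\<Sum>j\<in>F. (norm (Lam j s))\<^sup>2) * sqrt (\<Sum>j\<in>F. (norm (g j))\<^sup>2)"
  proof -
    have "(\<Sum>j\<in>F. norm (Lam j s) * norm (g j))\<^sup>2 \<le> (\<Sum>j\<in>F. (norm (Lam j s))\<^sup>2) * (\<Sum>j\<in>F. (norm (g j))\<^sup>2)"
      by (rule Cauchy_Schwarz_ineq_sum)
    then have "sqrt ((\<Sum>j\<in>F. norm (Lam j s) * norm (g j))\<^sup>2) \<le> sqrt ((\<Sum>j\<in>F. (norm (Lam j s))\<^sup>2) * (\<Sum>j\<in>F. (norm (g j))\<^sup>2))"
      using real_sqrt_le_mono by blast
    then show ?thesis by (simp add: real_sqrt_mult)
  qed
  also have "\<dots> \<le> (sqrt B * norm s) * sqrt (\<Sum>j\<in>F. (norm (g j))\<^sup>2)"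
  proof (rule mult_right_mono)
    have "(\<Sum>j\<in>F. (norm (Lam j s))\<^sup>2) \<le> (\<Sum>\<^sub>\<infinity>j\<in>J. (norm (Lam j s))\<^sup>2)"
      using bes F by (intro finite_sum_le_infsum) auto
    also have "\<dots> \<le> B * (norm s)\<^sup>2" using bes by blast
    finally have "sqrt (\<Sum>j\<in>F. (norm (Lam j s))\<^sup>2) \<le> sqrt (B * (norm s)\<^sup>2)" using real_sqrt_le_mono by blast
    then show "sqrt (\<Sum>j\<in>F. (norm (Lam j s))\<^sup>2) \<le> sqrt B * norm s" by (simp add: real_sqrt_mult)
  qed (simp add: sum_nonneg)
  finally have *: "(norm s)\<^sup>2 \<le> norm s * (sqrt B * sqrt (\<Sum>j\<in>F. (norm (g j))\<^sup>2))"
    by (simp add: algebra_simps)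
  show ?thesis
  proof (cases "norm s = 0")
    case True then show ?thesis unfolding s_def[symmetric] using B by (simp add: sum_nonneg)
  next
    case False
    then have "norm s > 0" by simp
    with * show ?thesis unfolding s_def[symmetric] by (simp add: power2_eq_square)
  qed
qed

lemma synth:
  fixes Lam Lamadj :: "'i \<Rightarrow> 'a::{real_inner,complete_space} \<Rightarrow> 'a"
  assumes adj: "\<And>j x y. j \<in> J \<Longrightarrow> y \<in> Hs j \<Longrightarrow> inner (Lam j x) y = inner x (Lamadj j y)"
    and bes: "\<And>x. (\<lambda>j. (norm (Lam j x))\<^sup>2) summable_on J \<and> (\<Sum>\<^sub>\<infinity>j\<in>J. (norm (Lam j x))\<^sup>2) \<le> B * (norm x)\<^sup>2"
    and B: "B > 0" and g: "\<And>j. j\<in>J \<Longrightarrow> g j \<in> Hs j"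
    and gs: "(\<lambda>j. (norm (g j))\<^sup>2) summable_on J"
  shows "(\<lambda>j. Lamadj j (g j)) summable_on J \<and>
         norm (\<Sum>\<^sub>\<infinity>j\<in>J. Lamadj j (g j)) \<le> sqrt B * sqrt (\<Sum>\<^sub>\<infinity>j\<in>J. (norm (g j))\<^sup>2)"
proof -
  define G where "G = (\<lambda>j. (norm (g j))\<^sup>2)"
  define f where "f = (\<lambda>j. Lamadj j (g j))"
  define L where "L = infsum G J"
  have fin: "norm (sum f F) \<le> sqrt B * sqrt (sum G F)" if "finite F" "F \<subseteq> J" for F
    unfolding f_def G_def using finite_synth[OF adj bes B that] g that by blast
  have Gle: "sum G F \<le> L" if "finite F" "F \<subseteq> J" for F
    unfolding L_def G_def using gs that by (intro finite_sum_le_infsum) auto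
  have limG: "(sum G \<longlongrightarrow> L) (finite_subsets_at_top J)"
    using gs unfolding L_def G_def by (simp add: has_sum_def[symmetric])
  have "\<exists>P. eventually P (finite_subsets_at_top J) \<and>
              (\<forall>F F'. P F \<and> P F' \<longrightarrow> dist (sum f F) (sum f F') < e)" if "e>0" for e
  proof -
    define d where "d = e\<^sup>2 / (16 * B)"
    have d: "d > 0" using that B by (simp add: d_def)
    have sBd: "sqrt B * sqrt d = e / 4"
    proof -
      have "sqrt B * sqrt d = sqrt (B * d)" by (simp add: real_sqrt_mult)
      also have "B * d = (e/4)\<^sup>2" using B by (simp add: d_def power2_eq_square field_simps)
      finally show ?thesis using that by simp
    qed
    define P where "P F \<longleftrightarrow> finite F \<and> F \<subseteq> J \<and> dist (sum G F) L < d" for F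
    have ev_P: "eventually P (finite_subsets_at_top J)"
      using limG d
      by (auto simp add: P_def[abs_def] eventually_conj_iff eventually_finite_subsets_at_top_weakI tendsto_iff)
    have half: "norm (sum f (F1 - F2)) \<le> e/4" if "P F1" "P F2" for F1 F2
    proof -
      have f1: "finite F1" "F1 \<subseteq> J" "finite F2" "F2 \<subseteq> J" using that by (auto simp: P_def)
      have "sum G (F1 - F2) + sum G F2 = sum G (F1 \<union> F2)"
        using f1 by (metis Un_Diff_cancel2 finite_Diff Diff_disjoint sum.union_disjoint Int_commute Diff_Int_distrib2 Int_Diff)
      also have "\<dots> \<le> L" using f1 Gle[of "F1 \<union> F2"] by auto
      finally have "sum G (F1 - F2) \<le> L - sum G F2" by simp
      also have "\<dots> < d" using that(2) by (auto simp: P_def dist_real_def)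
      finally have "sum G (F1 - F2) \<le> d" by simp
      then have "sqrt (sum G (F1 - F2)) \<le> sqrt d" by simp
      then have "sqrt B * sqrt (sum G (F1 - F2)) \<le> sqrt B * sqrt d"
        using B by (simp add: mult_left_mono)
      moreover have "norm (sum f (F1 - F2)) \<le> sqrt B * sqrt (sum G (F1 - F2))"
        using f1 by (intro fin) auto
      ultimately show ?thesis using sBd by simp
    qed
    have "dist (sum f F1) (sum f F2) < e" if "P F1" "P F2" for F1 F2
    proof -
      have f1: "finite F1" "finite F2" using that by (auto simp: P_def)
      have "sum f F1 = sum f (F1 - F2) + sum f (F1 \<inter> F2)"
        using f1 by (metis add.commute sum.Int_Diff)
      moreover have "sum f F2 = sum f (F2 - F1) + sum f (F1 \<inter> F2)"
        using f1 by (metis add.commute sum.Int_Diff Int_commute)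
      ultimately have "dist (sum f F1) (sum f F2) = norm (sum f (F1 - F2) - sum f (F2 - F1))"
        by (simp add: dist_norm)
      also have "\<dots> \<le> norm (sum f (F1 - F2)) + norm (sum f (F2 - F1))" by (rule norm_triangle_ineq4)
      also have "\<dots> \<le> e/4 + e/4" using half that by (meson add_mono)
      also have "\<dots> < e" using \<open>e>0\<close> by simp
      finally show ?thesis .
    qed
    then show ?thesis using ev_P by blast
  qed
  then have "cauchy_filter (filtermap (sum f) (finite_subsets_at_top J))"
    by (simp add: cauchy_filter_metric_filtermap)
  moreover have "complete (UNIV::'a set)"
    by (meson Cauchy_convergent UNIV_I complete_def convergent_def)
  ultimately obtain L' where lim: "(sum f \<longlongrightarrow> L') (finite_subsets_at_top J)"
    using complete_uniform[where S=UNIV] by (force simp add: filterlim_def)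
  then have sf: "f summable_on J" using summable_on_def has_sum_def by blast
  have "infsum f J = L'" using lim by (simp add: has_sum_def[symmetric] infsumI)
  moreover have "norm L' \<le> sqrt B * sqrt L"
  proof (rule Lim_norm_ubound[OF _ lim])
    show "\<not> trivial_limit (finite_subsets_at_top J)" by simp
    show "\<forall>\<^sub>F x in finite_subsets_at_top J. norm (sum f x) \<le> sqrt B * sqrt L"
    proof (rule eventually_finite_subsets_at_top_weakI)
      fix F assume F: "finite F" "F \<subseteq> J"
      have "norm (sum f F) \<le> sqrt B * sqrt (sum G F)" using fin F .
      also have "\<dots> \<le> sqrt B * sqrt L" using Gle[OF F] B by (simp add: mult_left_mono)
      finally show "norm (sum f F) \<le> sqrt B * sqrt L" .
    qed
  qed
  ultimately show ?thesis using sf unfolding f_def G_def L_def by simp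
qed


lemma has_sum_finsum:
  fixes f :: "'n \<Rightarrow> 'i \<Rightarrow> 'a::real_normed_vector"
  assumes "finite I" "\<And>i. i\<in>I \<Longrightarrow> f i summable_on A"
  shows "((\<lambda>x. \<Sum>i\<in>I. f i x) has_sum (\<Sum>i\<in>I. infsum (f i) A)) A"
  using assms
proof (induction I rule: finite_induct)
  case empty then show ?case by (simp add: has_sum_0)
next
  case (insert i I)
  then have "((\<lambda>x. f i x + (\<Sum>i\<in>I. f i x)) has_sum (infsum (f i) A + (\<Sum>i\<in>I. infsum (f i) A))) A"
    by (intro has_sum_add) auto
  then show ?case using insert by simp
qed

theorem mainTheorem6:
  fixes K :: "'a::{real_inner, complete_space} \<Rightarrow> 'a"
    and Hs :: "int \<Rightarrow> 'a set"
    and J :: "int set"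
    and Lam Lamadj Theta :: "int \<Rightarrow> 'a \<Rightarrow> 'a"
    and N :: nat
  assumes sep: "separable_space (euclidean :: 'a topology)"
    and Hs_sub: "\<And>j. j \<in> J \<Longrightarrow> subspace (Hs j) \<and> closed (Hs j)"
    and K_bl: "bounded_linear K"
    and K_closed: "closed (range K)"
    and Lam_bl: "\<And>j. j \<in> J \<Longrightarrow> bounded_linear (Lam j) \<and> range (Lam j) \<subseteq> Hs j"
    and Theta_bl: "\<And>j. j \<in> J \<Longrightarrow> bounded_linear (Theta j) \<and> range (Theta j) \<subseteq> Hs j"
    and Lam_adj: "\<And>j x y. j \<in> J \<Longrightarrow> y \<in> Hs j \<Longrightarrow> inner (Lam j x) y = inner x (Lamadj j y)"
    and Lam_bessel: "g_bessel_on UNIV Lam J"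
    and Theta_bessel: "g_bessel_on UNIV Theta J"
    and U_maps: "\<forall>f\<in>range K. mixed_op Lamadj Theta J f \<in> range K"
    and approx: "opnorm_on (range K) (\<lambda>f. f - mixed_op Lamadj Theta J f) < 1"
  defines "gam \<equiv> (\<lambda>j f. \<Sum>n\<le>N. Theta j (((\<lambda>g. g - mixed_op Lamadj Theta J g) ^^ n) f))"
  shows "g_bessel_on (range K) gam J \<and>
         opnorm_on (range K) (\<lambda>f. f - mixed_op Lamadj gam J f) < 1"
proof -
  define U where "U = mixed_op Lamadj Theta J"
  define W where "W = (\<lambda>g. g - U g)"
  obtain BL where BL: "BL > 0" "\<And>x. (\<lambda>j. (norm (Lam j x))\<^sup>2) summable_on J \<and> (\<Sum>\<^sub>\<infinity>j\<in>J. (norm (Lam j x))\<^sup>2) \<le> BL * (norm x)\<^sup>2"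
    using Lam_bessel unfolding g_bessel_on_def by blast
  obtain BT where BT: "BT > 0" "\<And>x. (\<lambda>j. (norm (Theta j x))\<^sup>2) summable_on J \<and> (\<Sum>\<^sub>\<infinity>j\<in>J. (norm (Theta j x))\<^sup>2) \<le> BT * (norm x)\<^sup>2"
    using Theta_bessel unfolding g_bessel_on_def by blast
  have Th_in: "Theta j x \<in> Hs j" if "j \<in> J" for j x using Theta_bl[OF that] by blast
  have Usum: "(\<lambda>j. Lamadj j (Theta j h)) summable_on J" and Ubd: "norm (U h) \<le> sqrt BL * sqrt BT * norm h" for h
  proof -
    have *: "(\<lambda>j. Lamadj j (Theta j h)) summable_on J \<and>
         norm (\<Sum>\<^sub>\<infinity>j\<in>J. Lamadj j (Theta j h)) \<le> sqrt BL * sqrt (\<Sum>\<^sub>\<infinity>j\<in>J. (norm (Theta j h))\<^sup>2)"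
      by (rule synth[OF Lam_adj BL(2) BL(1)]) (use Th_in BT in auto)
    then show "(\<lambda>j. Lamadj j (Theta j h)) summable_on J" by blast
    have "sqrt (\<Sum>\<^sub>\<infinity>j\<in>J. (norm (Theta j h))\<^sup>2) \<le> sqrt (BT * (norm h)\<^sup>2)"
      using BT(2)[of h] real_sqrt_le_mono by blast
    also have "\<dots> = sqrt BT * norm h" by (simp add: real_sqrt_mult)
    finally have "sqrt BL * sqrt (\<Sum>\<^sub>\<infinity>j\<in>J. (norm (Theta j h))\<^sup>2) \<le> sqrt BL * (sqrt BT * norm h)"
      using BL(1) by (intro mult_left_mono) auto
    with * show "norm (U h) \<le> sqrt BL * sqrt BT * norm h"
      unfolding U_def mixed_op_def by (simp add: mult.assoc)
  qed
  define S where "S = {c. 0 \<le> c \<and> (\<forall>f\<in>range K. norm (W f) \<le> c * norm f)}"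
  have "1 + sqrt BL * sqrt BT \<in> S"
  proof -
    have "norm (W f) \<le> (1 + sqrt BL * sqrt BT) * norm f" for f
    proof -
      have "norm (W f) \<le> norm f + norm (U f)" unfolding W_def by (rule norm_triangle_ineq4)
      also have "\<dots> \<le> norm f + sqrt BL * sqrt BT * norm f" using Ubd[of f] by simp
      finally show ?thesis by (simp add: algebra_simps)
    qed
    then show ?thesis unfolding S_def using BL(1) BT(1) by (auto intro!: add_nonneg_nonneg mult_nonneg_nonneg)
  qed
  then have Sne: "S \<noteq> {}" by blast
  have "Inf S < 1" using approx unfolding opnorm_on_def S_def W_def U_def .
  then obtain c where "c \<in> S" "c < 1" using cInf_lessD[OF Sne] by blast
  then have c0: "0 \<le> c" and c1: "c < 1" and cW: "\<And>f. f \<in> range K \<Longrightarrow> norm (W f) \<le> c * norm f"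
    unfolding S_def by auto
  have subK: "subspace (range K)"
    using K_bl by (simp add: bounded_linear.linear linear_subspace_image subspace_UNIV)
  have WK: "W f \<in> range K" if "f \<in> range K" for f
    unfolding W_def using U_maps that subK unfolding U_def by (meson subspace_diff)
  have Wn: "(W ^^ n) f \<in> range K \<and> norm ((W ^^ n) f) \<le> c ^ n * norm f" if "f \<in> range K" for n f
  proof (induction n)
    case 0 then show ?case using that by simp
  next
    case (Suc n)
    then have "norm ((W ^^ Suc n) f) \<le> c * norm ((W ^^ n) f)" using cW by simp
    also have "\<dots> \<le> c * (c ^ n * norm f)" using Suc c0 by (simp add: mult_left_mono)
    finally show ?case using Suc WK by simp
  qed
  have gam_eq: "gam j f = (\<Sum>n\<le>N. Theta j ((W ^^ n) f))" for j f
    unfolding gam_def W_def U_def by simp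
  have gam_eq2: "gam j f = Theta j (\<Sum>n\<le>N. (W ^^ n) f)" if "j \<in> J" for j f
    using Theta_bl[OF that] gam_eq by (simp add: bounded_linear.linear linear_sum o_def)
  have bes: "g_bessel_on (range K) gam J"
    unfolding g_bessel_on_def
  proof (intro exI[of _ "BT * (real N + 1)\<^sup>2"] conjI ballI)
    show "BT * (real N + 1)\<^sup>2 > 0" using BT by simp
    fix f assume f: "f \<in> range K"
    define h where "h = (\<Sum>n\<le>N. (W ^^ n) f)"
    have geq: "(\<lambda>j. (norm (gam j f))\<^sup>2) summable_on J \<longleftrightarrow> (\<lambda>j. (norm (Theta j h))\<^sup>2) summable_on J"
      by (rule summable_on_cong) (simp add: gam_eq2 h_def)
    have ieq: "(\<Sum>\<^sub>\<infinity>j\<in>J. (norm (gam j f))\<^sup>2) = (\<Sum>\<^sub>\<infinity>j\<in>J. (norm (Theta j h))\<^sup>2)"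
      by (rule infsum_cong) (simp add: gam_eq2 h_def)
    show "(\<lambda>j. (norm (gam j f))\<^sup>2) summable_on J" using geq BT by blast
    have hn: "norm h \<le> (real N + 1) * norm f"
    proof -
      have "norm h \<le> (\<Sum>n\<le>N. norm ((W ^^ n) f))" unfolding h_def by (rule norm_sum)
      also have "\<dots> \<le> (\<Sum>n\<le>N. norm f)"
      proof (rule sum_mono)
        fix n
        have "c ^ n \<le> 1" using c0 c1 by (simp add: power_le_one)
        then have "c ^ n * norm f \<le> norm f" using mult_right_mono[of "c ^ n" 1 "norm f"] by simp
        then show "norm ((W ^^ n) f) \<le> norm f" using Wn[OF f, of n] by linarith
      qed
      finally show ?thesis by (simp add: add.commute)
    qed
    have "(\<Sum>\<^sub>\<infinity>j\<in>J. (norm (gam j f))\<^sup>2) \<le> BT * (norm h)\<^sup>2" using ieq BT by simp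
    also have "\<dots> \<le> BT * ((real N + 1) * norm f)\<^sup>2"
      using hn BT by (intro mult_left_mono power_mono) auto
    finally show "(\<Sum>\<^sub>\<infinity>j\<in>J. (norm (gam j f))\<^sup>2) \<le> BT * (real N + 1)\<^sup>2 * (norm f)\<^sup>2"
      by (simp add: power_mult_distrib mult.assoc)
  qed
  have Veq: "f - mixed_op Lamadj gam J f = (W ^^ Suc N) f" if f: "f \<in> range K" for f
  proof -
    have "mixed_op Lamadj gam J f = (\<Sum>\<^sub>\<infinity>j\<in>J. \<Sum>n\<le>N. Lamadj j (Theta j ((W ^^ n) f)))"
      unfolding mixed_op_def
    proof (rule infsum_cong)
      fix j assume j: "j \<in> J"
      show "Lamadj j (gam j f) = (\<Sum>n\<le>N. Lamadj j (Theta j ((W ^^ n) f)))"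
        unfolding gam_eq
        by (rule adj_sum[where H="Hs j" and L="Lam j"]) (use Hs_sub j Lam_adj Th_in in auto)
    qed
    also have "\<dots> = (\<Sum>n\<le>N. U ((W ^^ n) f))"
      unfolding U_def mixed_op_def
      by (rule infsumI, rule has_sum_finsum) (use Usum in auto)
    also have "\<dots> = (\<Sum>n\<le>N. (W ^^ n) f - (W ^^ Suc n) f)"
      by (simp add: W_def)
    also have "\<dots> = f - (W ^^ Suc N) f" by (subst sum_telescope) simp
    finally show ?thesis by simp
  qed
  define S' where "S' = {c. 0 \<le> c \<and> (\<forall>f\<in>range K. norm (f - mixed_op Lamadj gam J f) \<le> c * norm f)}"
  have "c ^ Suc N \<in> S'"
    unfolding S'_def
  proof (intro CollectI conjI ballI)
    show "0 \<le> c ^ Suc N" using c0 by simp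
    fix f assume f: "f \<in> range K"
    show "norm (f - mixed_op Lamadj gam J f) \<le> c ^ Suc N * norm f"
      unfolding Veq[OF f] using Wn[OF f, of "Suc N"] by blast
  qed
  moreover have "bdd_below S'" unfolding S'_def by (rule bdd_belowI[of _ 0]) auto
  ultimately have "Inf S' \<le> c ^ Suc N" by (rule cInf_lower)
  also have "\<dots> < 1" using c0 c1
    by (metis power_Suc_less_one le_less mult_zero_left power_Suc zero_less_one)
  finally have "opnorm_on (range K) (\<lambda>f. f - mixed_op Lamadj gam J f) < 1"
    unfolding opnorm_on_def S'_def .
  with bes show ?thesis by blast
qed

end
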